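(* Let $S$ be a finite alphabet, $X = S^{\mathbb{Z}}$ the full shift, and $f : X \to X$ a cellular automaton. Then the language of the asymptotic set $\mathcal{A}(f)$ is a $\Sigma^1_1$ set (identifying $S^*$ with $\mathbb{N}$ via a computable bijection).
   Context: A cellular automaton on $X = S^{\mathbb{Z}}$ (with the product topology) is a continuous map $f: X\to X$ commuting with the shift. The asymptotic set of $f$ is $\mathcal{A}(f) = \bigcup_{x \in X} \bigcap_{n \in \mathbb{N}} \overline{\bigcup_{k \geq n} \{f^k(x)\}}$, i.e. the union over all $x$ of the sets of limit points of the orbit of $x$. The language of a (not necessarily closed) set $Y \subseteq S^{\mathbb{Z}}$ is the set of words $w \in S^*$ such that $w = y_{[0,k-1]}$ for some $y \in Y$ and $k \in \mathbb{N}$. A set $P \subseteq \mathbb{N}$ is $\Sigma^1_1$ if it is definable by a formula with one existential set quantifier, no universal set quantifier and arbitrary number quantifiers; equivalently $w \in P \iff (\exists C \subseteq \mathbb{N})(\forall m \in \mathbb{N})(\exists \ell \in \mathbb{N}) R(C,m,\ell,w)$ for a recursive predicate $R$. *)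

theory Defs
  imports "HOL-Analysis.Analysis" "HOL-Library.Nat_Bijection"
begin

definition shift_topology :: "(int \<Rightarrow> 'a) topology" where
  "shift_topology = product_topology (\<lambda>_. discrete_topology (UNIV :: 'a set)) UNIV"

definition shift :: "(int \<Rightarrow> 'a) \<Rightarrow> (int \<Rightarrow> 'a)" where
  "shift x = (\<lambda>i. x (i + 1))"

definition cellular_automaton :: "((int \<Rightarrow> 'a) \<Rightarrow> (int \<Rightarrow> 'a)) \<Rightarrow> bool" where
  "cellular_automaton f \<longleftrightarrow>
     continuous_map shift_topology shift_topology f \<and> f \<circ> shift = shift \<circ> f"

definition asymptotic_set :: "((int \<Rightarrow> 'a) \<Rightarrow> (int \<Rightarrow> 'a)) \<Rightarrow> (int \<Rightarrow> 'a) set" where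
  "asymptotic_set f =
     (\<Union>x. \<Inter>n. shift_topology closure_of (\<Union>k\<in>{n..}. {(f ^^ k) x}))"

definition language :: "(int \<Rightarrow> 'a) set \<Rightarrow> 'a list set" where
  "language Y = {w. \<exists>y\<in>Y. \<exists>k::nat. w = map (\<lambda>i. y (int i)) [0..<k]}"

datatype recf = Zf | Sf | Proj nat | Comp recf "recf list" | PrimRec recf recf | Mn recf | Orc

lemma list_all2_mono_ind [mono]:
  "(\<And>x y. P x y \<longrightarrow> Q x y) \<Longrightarrow> list_all2 P xs ys \<longrightarrow> list_all2 Q xs ys"
  by (auto intro: list_all2_mono)

inductive eval :: "nat set \<Rightarrow> recf \<Rightarrow> nat list \<Rightarrow> nat \<Rightarrow> bool" for C where
  ev_Z: "eval C Zf xs 0"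
| ev_S: "eval C Sf (x # xs) (Suc x)"
| ev_Proj: "i < length xs \<Longrightarrow> eval C (Proj i) xs (xs ! i)"
| ev_Comp: "list_all2 (\<lambda>g y. eval C g xs y) gs ys \<Longrightarrow> eval C f ys z \<Longrightarrow> eval C (Comp f gs) xs z"
| ev_PR0: "eval C f xs y \<Longrightarrow> eval C (PrimRec f g) (0 # xs) y"
| ev_PRS: "eval C (PrimRec f g) (n # xs) y \<Longrightarrow> eval C g (y # n # xs) z \<Longrightarrow>
           eval C (PrimRec f g) (Suc n # xs) z"
| ev_Mn: "eval C f (n # xs) 0 \<Longrightarrow> (\<forall>i<n. \<exists>y. eval C f (i # xs) y \<and> y \<noteq> 0) \<Longrightarrow>
          eval C (Mn f) xs n"
| ev_Orc: "eval C Orc (x # xs) (if x \<in> C then 1 else 0)"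

definition recursive_pred :: "(nat set \<Rightarrow> nat \<Rightarrow> nat \<Rightarrow> nat \<Rightarrow> bool) \<Rightarrow> bool" where
  "recursive_pred R \<longleftrightarrow>
     (\<exists>t. \<forall>C m l w. eval C t [m, l, w] (if R C m l w then 1 else 0))"

definition Sigma11 :: "nat set \<Rightarrow> bool" where
  "Sigma11 P \<longleftrightarrow> (\<exists>R. recursive_pred R \<and>
     (\<forall>w. w \<in> P \<longleftrightarrow> (\<exists>C::nat set. \<forall>m. \<exists>l. R C m l w)))"

definition word_code :: "('a \<Rightarrow> nat) \<Rightarrow> 'a list \<Rightarrow> nat" where
  "word_code enc w = list_encode (map enc w)"

end

theory Submission
  imports Defs
begin


datatype ex = V nat | Z | Succ ex | Orac ex | Rec ex ex ex

fun sem :: "nat set \<Rightarrow> nat list \<Rightarrow> ex \<Rightarrow> nat" where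
  "sem C env (V i) = env ! i"
| "sem C env Z = 0"
| "sem C env (Succ e) = Suc (sem C env e)"
| "sem C env (Orac e) = (if sem C env e \<in> C then 1 else 0)"
| "sem C env (Rec en e0 es) = rec_nat (sem C env e0) (\<lambda>k y. sem C (y # k # env) es) (sem C env en)"

fun wfe :: "nat \<Rightarrow> ex \<Rightarrow> bool" where
  "wfe n (V i) = (i < n)"
| "wfe n Z = True"
| "wfe n (Succ e) = wfe n e"
| "wfe n (Orac e) = wfe n e"
| "wfe n (Rec en e0 es) = (wfe n en \<and> wfe n e0 \<and> wfe (Suc (Suc n)) es)"

fun cmp :: "nat \<Rightarrow> ex \<Rightarrow> recf" where
  "cmp n (V i) = Proj i"
| "cmp n Z = Zf"
| "cmp n (Succ e) = Comp Sf [cmp n e]"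
| "cmp n (Orac e) = Comp Orc [cmp n e]"
| "cmp n (Rec en e0 es) = Comp (PrimRec (cmp n e0) (cmp (Suc (Suc n)) es)) (cmp n en # map Proj [0..<n])"

lemma eval_primrec:
  assumes "eval C f xs (rec_nat a (\<lambda>k y. h (y # k # xs)) 0)"
      and "\<And>k y. eval C g (y # k # xs) (h (y # k # xs))"
  shows "eval C (PrimRec f g) (v # xs) (rec_nat a (\<lambda>k y. h (y # k # xs)) v)"
proof (induction v)
  case 0 then show ?case using assms(1) by (auto intro: eval.ev_PR0)
next
  case (Suc v) then show ?case using assms(2) by (auto intro: eval.ev_PRS)
qed

lemma cmp_correct: "wfe n e \<Longrightarrow> length env = n \<Longrightarrow> eval C (cmp n e) env (sem C env e)"
proof (induction e arbitrary: n env)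
  case (V i) then show ?case by (auto intro: eval.ev_Proj)
next
  case Z then show ?case by (auto intro: eval.ev_Z)
next
  case (Succ e)
  then have "eval C (cmp n e) env (sem C env e)" by auto
  then show ?case by (auto intro!: eval.ev_Comp[where ys="[sem C env e]"] eval.ev_S[where xs="[]", simplified])
next
  case (Orac e)
  then have "eval C (cmp n e) env (sem C env e)" by auto
  then show ?case using eval.ev_Orc[of C "sem C env e" "[]"]
    by (auto intro!: eval.ev_Comp[where ys="[sem C env e]"])
next
  case (Rec en e0 es)
  have a: "eval C (cmp n en) env (sem C env en)" using Rec by auto
  have b: "eval C (cmp n e0) env (sem C env e0)" using Rec by auto
  have c: "\<And>k y. eval C (cmp (Suc (Suc n)) es) (y # k # env) (sem C (y # k # env) es)"
    using Rec by auto
  have d: "list_all2 (\<lambda>g y. eval C g env y) (map Proj [0..<n]) env"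
    using Rec.prems by (auto simp: list_all2_conv_all_nth intro: eval.ev_Proj)
  have "eval C (PrimRec (cmp n e0) (cmp (Suc (Suc n)) es)) (sem C env en # env)
     (rec_nat (sem C env e0) (\<lambda>k y. sem C (y # k # env) es) (sem C env en))"
    by (rule eval_primrec[where h="\<lambda>l. sem C l es"]) (use b c in auto)
  then show ?case using a d by (auto intro!: eval.ev_Comp)
qed

lemma recursive_pred_ex:
  assumes "wfe 3 e" and "\<And>C m l w. sem C [m, l, w] e = (if R C m l w then 1 else 0)"
  shows "recursive_pred R"
  unfolding recursive_pred_def
proof (intro exI allI)
  fix C m l w
  show "eval C (cmp 3 e) [m, l, w] (if R C m l w then 1 else 0)"
    using cmp_correct[OF assms(1), of "[m,l,w]" C] assms(2)[of C m l w] by simp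
qed


fun lift :: "nat \<Rightarrow> nat \<Rightarrow> ex \<Rightarrow> ex" where
  "lift c d (V i) = V (if i < c then i else i + d)"
| "lift c d Z = Z"
| "lift c d (Succ e) = Succ (lift c d e)"
| "lift c d (Orac e) = Orac (lift c d e)"
| "lift c d (Rec en e0 es) = Rec (lift c d en) (lift c d e0) (lift (Suc (Suc c)) d es)"

lemma sem_lift: "length pre = c \<Longrightarrow> length ins = d \<Longrightarrow>
  sem C (pre @ ins @ env) (lift c d e) = sem C (pre @ env) e"
proof (induction e arbitrary: pre c)
  case (V i) then show ?case by (auto simp: nth_append)
next
  case (Rec en e0 es)
  have "\<And>k y. sem C (y # k # pre @ ins @ env) (lift (Suc (Suc c)) d es) = sem C (y # k # pre @ env) es"
    using Rec.IH(3)[of "y # k # pre" for y k] Rec.prems by auto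
  moreover have "sem C (pre @ ins @ env) (lift c d en) = sem C (pre @ env) en"
    using Rec.IH(1)[of pre] Rec.prems by simp
  moreover have "sem C (pre @ ins @ env) (lift c d e0) = sem C (pre @ env) e0"
    using Rec.IH(2)[of pre] Rec.prems by simp
  ultimately show ?case by simp
qed auto

lemma sem_lift1[simp]: "sem C (j # env) (lift 0 1 x) = sem C env x"
  using sem_lift[of "[]" 0 "[j]" 1 C env x] by simp
lemma sem_lift1'[simp]: "sem C (j # env) (lift 0 (Suc 0) x) = sem C env x"
  using sem_lift1 by simp
lemma sem_lift2[simp]: "sem C (y # j # env) (lift 0 2 x) = sem C env x"
  using sem_lift[of "[]" 0 "[y,j]" 2 C env x] by simp

lemma wfe_lift: "wfe n e \<Longrightarrow> c \<le> n \<Longrightarrow> wfe (n + d) (lift c d e)"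
proof (induction e arbitrary: n c)
  case (Rec en e0 es)
  then show ?case using Rec.IH(3)[of "Suc (Suc n)" "Suc (Suc c)"] by simp
qed auto
lemma wfe_lift1[simp]: "wfe n e \<Longrightarrow> wfe (Suc n) (lift 0 1 e)"
  using wfe_lift[of n e 0 1] by simp
lemma wfe_lift1'[simp]: "wfe n e \<Longrightarrow> wfe (Suc n) (lift 0 (Suc 0) e)"
  using wfe_lift1 by simp
lemma wfe_lift2[simp]: "wfe n e \<Longrightarrow> wfe (Suc (Suc n)) (lift 0 2 e)"
  using wfe_lift[of n e 0 2] by simp

definition b2n :: "bool \<Rightarrow> nat" where "b2n P = (if P then 1 else 0)"
lemma b2n_simps[simp]: "b2n P = 0 \<longleftrightarrow> \<not> P" "b2n P = Suc 0 \<longleftrightarrow> P" "b2n P = 1 \<longleftrightarrow> P"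
  "0 < b2n P \<longleftrightarrow> P" "0 = b2n P \<longleftrightarrow> \<not> P"
  by (auto simp: b2n_def)

definition K :: "nat \<Rightarrow> ex" where "K n = (Succ ^^ n) Z"
lemma sem_K[simp]: "sem C env (K n) = n" by (induction n) (auto simp: K_def)
lemma wfe_K[simp]: "wfe n (K m)" by (induction m) (auto simp: K_def)

definition pred :: "ex \<Rightarrow> ex" where "pred e = Rec e Z (V 1)"
lemma sem_pred[simp]: "sem C env (pred e) = sem C env e - 1"
  unfolding pred_def by (cases "sem C env e") auto
lemma wfe_pred[simp]: "wfe n e \<Longrightarrow> wfe n (pred e)" by (simp add: pred_def)

definition plus :: "ex \<Rightarrow> ex \<Rightarrow> ex" where "plus a b = Rec b a (Succ (V 0))"
lemma sem_plus[simp]: "sem C env (plus a b) = sem C env a + sem C env b"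
proof -
  have "\<And>n. rec_nat x (\<lambda>k y. Suc y) n = x + n" for x by (induct_tac n) auto
  then show ?thesis by (simp add: plus_def)
qed
lemma wfe_plus[simp]: "wfe n a \<Longrightarrow> wfe n b \<Longrightarrow> wfe n (plus a b)" by (simp add: plus_def)

definition minus :: "ex \<Rightarrow> ex \<Rightarrow> ex" where "minus a b = Rec b a (pred (V 0))"
lemma sem_minus[simp]: "sem C env (minus a b) = sem C env a - sem C env b"
proof -
  have "\<And>n. rec_nat x (\<lambda>k y. y - 1) n = x - n" for x by (induct_tac n) auto
  then show ?thesis by (simp add: minus_def)
qed
lemma wfe_minus[simp]: "wfe n a \<Longrightarrow> wfe n b \<Longrightarrow> wfe n (minus a b)" by (simp add: minus_def)

definition times :: "ex \<Rightarrow> ex \<Rightarrow> ex" where "times a b = Rec b Z (plus (V 0) (lift 0 2 a))"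
lemma sem_times[simp]: "sem C env (times a b) = sem C env a * sem C env b"
proof -
  have "\<And>n. rec_nat 0 (\<lambda>k y. y + x) n = x * n" for x by (induct_tac n) auto
  then show ?thesis by (simp add: times_def)
qed
lemma wfe_times[simp]: "wfe n a \<Longrightarrow> wfe n b \<Longrightarrow> wfe n (times a b)" by (simp add: times_def)

definition sumb :: "ex \<Rightarrow> ex \<Rightarrow> ex" where "sumb B e = Rec B Z (plus (V 0) (lift 0 1 e))"
lemma sem_sumb[simp]: "sem C env (sumb B e) = (\<Sum>j<sem C env B. sem C (j # env) e)"
proof -
  have "\<And>n. rec_nat 0 (\<lambda>k y. y + sem C (k # env) e) n = (\<Sum>j<n. sem C (j # env) e)"
    by (induct_tac n) auto
  then show ?thesis by (simp add: sumb_def)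
qed
lemma wfe_sumb[simp]: "wfe n B \<Longrightarrow> wfe (Suc n) e \<Longrightarrow> wfe n (sumb B e)"
  by (simp add: sumb_def)

definition sgE :: "ex \<Rightarrow> ex" where "sgE a = minus (K 1) (minus (K 1) a)"
lemma sem_sgE[simp]: "sem C env (sgE a) = b2n (sem C env a \<noteq> 0)"
  by (simp add: sgE_def b2n_def)
lemma wfe_sgE[simp]: "wfe n a \<Longrightarrow> wfe n (sgE a)" by (simp add: sgE_def)

definition notE :: "ex \<Rightarrow> ex" where "notE a = minus (K 1) a"
lemma sem_notE[simp]: "sem C env (notE a) = b2n (sem C env a = 0)"
  by (simp add: notE_def b2n_def)
lemma wfe_notE[simp]: "wfe n a \<Longrightarrow> wfe n (notE a)" by (simp add: notE_def)

definition eqE :: "ex \<Rightarrow> ex \<Rightarrow> ex" where "eqE a b = notE (plus (minus a b) (minus b a))"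
lemma sem_eqE[simp]: "sem C env (eqE a b) = b2n (sem C env a = sem C env b)"
  by (simp add: eqE_def b2n_def)
lemma wfe_eqE[simp]: "wfe n a \<Longrightarrow> wfe n b \<Longrightarrow> wfe n (eqE a b)" by (simp add: eqE_def)

definition leE :: "ex \<Rightarrow> ex \<Rightarrow> ex" where "leE a b = notE (minus a b)"
lemma sem_leE[simp]: "sem C env (leE a b) = b2n (sem C env a \<le> sem C env b)"
  by (simp add: leE_def b2n_def)
lemma wfe_leE[simp]: "wfe n a \<Longrightarrow> wfe n b \<Longrightarrow> wfe n (leE a b)" by (simp add: leE_def)

definition andE :: "ex \<Rightarrow> ex \<Rightarrow> ex" where "andE a b = times (sgE a) (sgE b)"
lemma sem_andE[simp]: "sem C env (andE a b) = b2n (sem C env a \<noteq> 0 \<and> sem C env b \<noteq> 0)"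
  by (simp add: andE_def b2n_def)
lemma wfe_andE[simp]: "wfe n a \<Longrightarrow> wfe n b \<Longrightarrow> wfe n (andE a b)" by (simp add: andE_def)

definition impE :: "ex \<Rightarrow> ex \<Rightarrow> ex" where "impE a b = notE (andE a (notE b))"
lemma sem_impE[simp]: "sem C env (impE a b) = b2n (sem C env a \<noteq> 0 \<longrightarrow> sem C env b \<noteq> 0)"
  by (simp add: impE_def b2n_def)
lemma wfe_impE[simp]: "wfe n a \<Longrightarrow> wfe n b \<Longrightarrow> wfe n (impE a b)" by (simp add: impE_def)

definition allB :: "ex \<Rightarrow> ex \<Rightarrow> ex" where "allB B e = notE (sumb B (notE e))"
lemma sem_allB[simp]: "sem C env (allB B e) = b2n (\<forall>j<sem C env B. sem C (j # env) e \<noteq> 0)"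
  by (auto simp: allB_def b2n_def)
lemma wfe_allB[simp]: "wfe n B \<Longrightarrow> wfe (Suc n) e \<Longrightarrow> wfe n (allB B e)" by (simp add: allB_def)

definition memL :: "nat list \<Rightarrow> ex \<Rightarrow> ex" where
  "memL ss x = sgE (foldr (\<lambda>s acc. plus (eqE x (K s)) acc) ss Z)"
lemma sem_memL[simp]: "sem C env (memL ss x) = b2n (sem C env x \<in> set ss)"
proof -
  have "sem C env (foldr (\<lambda>s acc. plus (eqE x (K s)) acc) ss Z) = 0 \<longleftrightarrow> sem C env x \<notin> set ss"
    by (induction ss) auto
  then show ?thesis by (simp add: memL_def b2n_def)
qed
lemma wfe_memL[simp]: "wfe n x \<Longrightarrow> wfe n (memL ss x)"
proof -
  assume "wfe n x"
  then have "wfe n (foldr (\<lambda>s acc. plus (eqE x (K s)) acc) ss Z)" by (induction ss) auto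
  then show ?thesis by (simp add: memL_def)
qed

definition memE :: "nat set \<Rightarrow> ex \<Rightarrow> ex" where "memE S x = memL (sorted_list_of_set S) x"
lemma sem_memE[simp]: "finite S \<Longrightarrow> sem C env (memE S x) = b2n (sem C env x \<in> S)"
  by (simp add: memE_def)
lemma wfe_memE[simp]: "wfe n x \<Longrightarrow> wfe n (memE S x)" by (simp add: memE_def)

definition triE :: "ex \<Rightarrow> ex" where "triE x = sumb (Succ x) (V 0)"
lemma triangle_sum: "triangle n = (\<Sum>j<Suc n. j)" by (induction n) auto
lemma sem_triE[simp]: "sem C env (triE x) = triangle (sem C env x)"
  by (simp add: triE_def triangle_sum)
lemma wfe_triE[simp]: "wfe n x \<Longrightarrow> wfe n (triE x)" by (simp add: triE_def)

definition peE :: "ex \<Rightarrow> ex \<Rightarrow> ex" where "peE a b = plus (triE (plus a b)) a"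
lemma sem_peE[simp]: "sem C env (peE a b) = prod_encode (sem C env a, sem C env b)"
  by (simp add: peE_def prod_encode_def)
lemma wfe_peE[simp]: "wfe n a \<Longrightarrow> wfe n b \<Longrightarrow> wfe n (peE a b)" by (simp add: peE_def)


definition tr :: "int \<Rightarrow> (int \<Rightarrow> 'a) \<Rightarrow> (int \<Rightarrow> 'a)" where "tr j y = (\<lambda>i. y (i + j))"

lemma tr_tr: "tr a (tr b y) = tr (a + b) y" by (simp add: tr_def ac_simps)
lemma tr_0[simp]: "tr 0 y = y" by (simp add: tr_def)

lemma topspace_shift[simp]: "topspace shift_topology = UNIV"
  by (simp add: shift_topology_def)

lemma openin_window:
  assumes "finite J"
  shows "openin shift_topology {y. \<forall>i\<in>J. y i = z i}"
proof -
  define X where "X = (\<lambda>i. if i \<in> J then {z i} else (UNIV :: 'a set))"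
  have "openin (product_topology (\<lambda>_. discrete_topology (UNIV :: 'a set)) UNIV) (\<Pi>\<^sub>E i\<in>UNIV. X i)"
    by (rule product_topology_basis) (use assms in \<open>auto simp: X_def intro: finite_subset\<close>)
  moreover have "(\<Pi>\<^sub>E i\<in>UNIV. X i) = {y. \<forall>i\<in>J. y i = z i}"
    by (auto simp: X_def PiE_def Pi_def)
  ultimately show ?thesis by (simp add: shift_topology_def)
qed

lemma compact_shift: "compact_space (shift_topology :: (int \<Rightarrow> 'a::finite) topology)"
  unfolding shift_topology_def
  by (simp add: compact_space_product_topology compact_space_discrete_topology)

lemma f_tr_nat:
  assumes "cellular_automaton f"
  shows "f (tr (int n) y) = tr (int n) (f y)"
proof (induction n arbitrary: y)
  case 0 then show ?case by simp
next
  case (Suc n)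
  have s: "f (tr 1 z) = tr 1 (f z)" for z
    using assms unfolding cellular_automaton_def shift_def tr_def
    by (metis comp_apply)
  have "tr (int (Suc n)) y = tr 1 (tr (int n) y)" by (simp add: tr_tr)
  then have "f (tr (int (Suc n)) y) = tr 1 (tr (int n) (f y))" using s Suc by simp
  then show ?case by (simp add: tr_tr)
qed

lemma f_tr:
  assumes "cellular_automaton f"
  shows "f (tr j y) = tr j (f y)"
proof (cases "j \<ge> 0")
  case True
  then obtain n where "j = int n" by (metis nonneg_eq_int)
  then show ?thesis using f_tr_nat[OF assms] by simp
next
  case False
  then obtain n where j: "j = - int n" by (metis neg_int_cases not_le)
  have "f y = f (tr (int n) (tr j y))" by (simp add: tr_tr j)
  also have "\<dots> = tr (int n) (f (tr j y))" by (rule f_tr_nat[OF assms])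
  finally have "tr j (f y) = tr j (tr (int n) (f (tr j y)))" by simp
  then show ?thesis by (simp add: tr_tr j)
qed

lemma local0:
  fixes f :: "(int \<Rightarrow> 'a::finite) \<Rightarrow> (int \<Rightarrow> 'a)"
  assumes ca: "cellular_automaton f"
  shows "\<exists>r::nat. \<forall>y z. (\<forall>i. \<bar>i\<bar> \<le> int r \<longrightarrow> y i = z i) \<longrightarrow> f y 0 = f z 0"
proof -
  have cont: "continuous_map shift_topology (discrete_topology UNIV) (\<lambda>y. f y 0)"
  proof -
    have "continuous_map shift_topology (discrete_topology (UNIV::'a set)) (\<lambda>x. x 0)"
      unfolding shift_topology_def by (rule continuous_map_product_projection) simp
    moreover have "continuous_map shift_topology shift_topology f"
      using ca by (simp add: cellular_automaton_def)
    ultimately show ?thesis using continuous_map_compose[of shift_topology shift_topology f]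
      by (auto simp: o_def)
  qed
  have "\<exists>n::nat. \<forall>y. (\<forall>i. \<bar>i\<bar> \<le> int n \<longrightarrow> y i = z i) \<longrightarrow> f y 0 = f z 0" for z
  proof -
    have op: "openin shift_topology {y. f y 0 = f z 0}"
      using cont unfolding continuous_map_def by (auto elim!: allE[of _ "{f z 0}"])
    obtain X where X: "z \<in> (\<Pi>\<^sub>E i\<in>UNIV. X i)" "finite {i. X i \<noteq> topspace (discrete_topology (UNIV::'a set))}"
        "(\<Pi>\<^sub>E i\<in>UNIV. X i) \<subseteq> {y. f y 0 = f z 0}"
      using product_topology_open_contains_basis[OF op[unfolded shift_topology_def], of z] by auto
    define J where "J = {i. X i \<noteq> UNIV}"
    have fJ: "finite J" using X(2) by (simp add: J_def)
    define n where "n = (\<Sum>i\<in>J. nat \<bar>i\<bar>)"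
    have "f y 0 = f z 0" if "\<forall>i. \<bar>i\<bar> \<le> int n \<longrightarrow> y i = z i" for y
    proof -
      have "y \<in> (\<Pi>\<^sub>E i\<in>UNIV. X i)"
      proof (auto simp: PiE_def Pi_def)
        fix i
        show "y i \<in> X i"
        proof (cases "i \<in> J")
          case True
          then have "nat \<bar>i\<bar> \<le> n" unfolding n_def by (rule member_le_sum) (use fJ in auto)
          then have "y i = z i" using that by auto
          then show ?thesis using X(1) by auto
        next
          case False then show ?thesis by (simp add: J_def)
        qed
      qed
      then show ?thesis using X(3) by auto
    qed
    then show ?thesis by blast
  qed
  then obtain N where N: "\<And>z y. (\<forall>i. \<bar>i\<bar> \<le> int (N z) \<longrightarrow> y i = z i) \<Longrightarrow> f y 0 = f z 0"
    by metis
  define cyl where "cyl = (\<lambda>z. {y::int\<Rightarrow>'a. \<forall>i\<in>{-int (N z)..int (N z)}. y i = z i})"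
  have "compactin shift_topology (topspace (shift_topology :: (int \<Rightarrow> 'a) topology))"
    using compact_shift compact_space_def by blast
  then have "\<exists>F. finite F \<and> F \<subseteq> range cyl \<and> UNIV \<subseteq> \<Union>F"
    unfolding compactin_def
    by (elim conjE allE[of _ "range cyl"]) (auto simp: cyl_def openin_window)
  then obtain F where F: "finite F" "F \<subseteq> range cyl" "UNIV \<subseteq> \<Union>F" by blast
  then obtain Z0 where Z0: "finite Z0" "F = cyl ` Z0" by (meson finite_subset_image)
  define r where "r = (\<Sum>z\<in>Z0. N z)"
  have "f y 0 = f y' 0" if "\<forall>i. \<bar>i\<bar> \<le> int r \<longrightarrow> y i = y' i" for y y'
  proof -
    obtain z where z: "z \<in> Z0" "y \<in> cyl z" using F(3) Z0(2) by blast
    have "N z \<le> r" unfolding r_def using z(1) by (rule member_le_sum) (use Z0(1) in auto)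
    moreover have yz: "\<forall>i. \<bar>i\<bar> \<le> int (N z) \<longrightarrow> y i = z i" using z(2) by (auto simp: cyl_def abs_le_iff)
    ultimately have "\<forall>i. \<bar>i\<bar> \<le> int (N z) \<longrightarrow> y' i = z i" using that by fastforce
    moreover note yz
    ultimately show ?thesis using N by metis
  qed
  then show ?thesis by blast
qed

lemma local_rule:
  fixes f :: "(int \<Rightarrow> 'a::finite) \<Rightarrow> (int \<Rightarrow> 'a)"
  assumes ca: "cellular_automaton f"
  shows "\<exists>r::nat. \<forall>y z i. (\<forall>d. \<bar>d\<bar> \<le> int r \<longrightarrow> y (i + d) = z (i + d)) \<longrightarrow> f y i = f z i"
proof -
  obtain r where r: "\<And>y z. (\<forall>i. \<bar>i\<bar> \<le> int r \<longrightarrow> y i = z i) \<Longrightarrow> f y 0 = f z 0"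
    using local0[OF ca] by blast
  have "f y i = f z i" if "\<forall>d. \<bar>d\<bar> \<le> int r \<longrightarrow> y (i + d) = z (i + d)" for y z i
  proof -
    have "f (tr i y) 0 = f (tr i z) 0" using that by (intro r) (simp add: tr_def add.commute)
    moreover have "f (tr i u) 0 = f u i" for u by (simp add: f_tr[OF ca]) (simp add: tr_def)
    ultimately show ?thesis by simp
  qed
  then show ?thesis by blast
qed

lemma closure_witness:
  assumes "y \<in> X closure_of S" "openin X T" "y \<in> T"
  shows "\<exists>z. z \<in> S \<and> z \<in> T"
proof -
  have "\<forall>T. y \<in> T \<and> openin X T \<longrightarrow> (\<exists>z. z \<in> S \<and> z \<in> T)"
    using assms(1) unfolding in_closure_of by blast
  then show ?thesis using assms(2,3) by blast
qed

lemma limit_exists: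
  fixes f :: "(int \<Rightarrow> 'a::finite) \<Rightarrow> (int \<Rightarrow> 'a)"
  assumes inf: "\<forall>n. \<exists>k\<ge>n. \<forall>p<L. (f ^^ k) x (int p) = v p"
  shows "\<exists>y\<in>asymptotic_set f. \<forall>p<L. y (int p) = v p"
proof -
  define S where "S n = {(f ^^ k) x | k. k \<ge> n \<and> (\<forall>p<L. (f ^^ k) x (int p) = v p)}" for n
  define Cn where "Cn n = shift_topology closure_of S n" for n
  have "(\<Inter>n. Cn n) \<noteq> {}"
  proof (rule compact_space_imp_nest[OF compact_shift])
    show "closedin shift_topology (Cn n)" for n by (simp add: Cn_def)
    show "Cn n \<noteq> {}" for n
    proof -
      obtain k where "k \<ge> n" "\<forall>p<L. (f ^^ k) x (int p) = v p" using inf by blast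
      then have "(f ^^ k) x \<in> S n" by (auto simp: S_def)
      moreover have "S n \<subseteq> Cn n" unfolding Cn_def by (rule closure_of_subset) simp
      ultimately show ?thesis by blast
    qed
    show "decseq Cn" unfolding decseq_def Cn_def
    proof (intro allI impI closure_of_mono)
      fix m n :: nat assume "m \<le> n"
      then show "S n \<subseteq> S m" unfolding S_def by force
    qed
  qed
  then obtain y where y: "\<And>n. y \<in> Cn n" by blast
  have "y \<in> shift_topology closure_of (\<Union>k\<in>{n..}. {(f ^^ k) x})" for n
  proof -
    have "S n \<subseteq> (\<Union>k\<in>{n..}. {(f ^^ k) x})" unfolding S_def by force
    then show ?thesis using y[of n] closure_of_mono unfolding Cn_def by blast
  qed
  then have ya: "y \<in> asymptotic_set f" unfolding asymptotic_set_def by blast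
  have "openin shift_topology {z. \<forall>i\<in>int ` {..<L}. z i = y i}" by (rule openin_window) simp
  then obtain s where "s \<in> S 0" "s \<in> {z. \<forall>i\<in>int ` {..<L}. z i = y i}"
    using closure_witness[of y shift_topology "S 0"] y[of 0] unfolding Cn_def by fastforce
  then have "\<forall>p<L. y (int p) = v p" unfolding S_def by force
  then show ?thesis using ya by blast
qed

lemma limit_back:
  fixes f :: "(int \<Rightarrow> 'a::finite) \<Rightarrow> (int \<Rightarrow> 'a)"
  assumes "y \<in> asymptotic_set f"
  shows "\<exists>x. \<forall>n. \<exists>k\<ge>n. \<forall>p<L. (f ^^ k) x (int p) = y (int p)"
proof -
  obtain x where x: "\<And>n. y \<in> shift_topology closure_of (\<Union>k\<in>{n..}. {(f ^^ k) x})"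
    using assms unfolding asymptotic_set_def by blast
  have op: "openin shift_topology {z. \<forall>i\<in>int ` {..<L}. z i = y i}" by (rule openin_window) simp
  have "\<exists>k\<ge>n. \<forall>p<L. (f ^^ k) x (int p) = y (int p)" for n
  proof -
    obtain s where "s \<in> (\<Union>k\<in>{n..}. {(f ^^ k) x})" "s \<in> {z. \<forall>i\<in>int ` {..<L}. z i = y i}"
      using closure_witness[OF x[of n] op] by auto
    then show ?thesis by auto
  qed
  then show ?thesis by blast
qed


abbreviation L1 :: "ex \<Rightarrow> ex" where "L1 \<equiv> lift 0 1"
abbreviation L2 :: "ex \<Rightarrow> ex" where "L2 \<equiv> lift 0 2"

definition code4 :: "nat \<Rightarrow> nat \<Rightarrow> nat \<Rightarrow> nat \<Rightarrow> nat" where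
  "code4 k a b e = prod_encode (k, prod_encode (a, prod_encode (b, e)))"
definition cntS :: "nat \<Rightarrow> nat set \<Rightarrow> nat \<Rightarrow> nat \<Rightarrow> nat \<Rightarrow> nat" where
  "cntS M C k a b = (\<Sum>e<M. if code4 k a b e \<in> C then 1 else 0)"
definition letS :: "nat \<Rightarrow> nat set \<Rightarrow> nat \<Rightarrow> nat \<Rightarrow> nat \<Rightarrow> nat" where
  "letS M C k a b = (\<Sum>e<M. e * (if code4 k a b e \<in> C then 1 else 0))"
definition wcS :: "nat \<Rightarrow> nat set \<Rightarrow> nat \<Rightarrow> nat \<Rightarrow> nat \<Rightarrow> nat \<Rightarrow> nat" where
  "wcS M C q k a b = rec_nat 0 (\<lambda>j y. Suc (prod_encode (letS M C k (a + j) b, y))) q"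
definition ValidS :: "nat \<Rightarrow> nat set \<Rightarrow> nat set \<Rightarrow> nat \<Rightarrow> nat set \<Rightarrow> nat \<Rightarrow> nat \<Rightarrow> nat \<Rightarrow> bool" where
  "ValidS M E G r C k a b \<longleftrightarrow> cntS M C k a b = 1 \<and> letS M C k a b \<in> E \<and>
     letS M C k a b = letS M C k (Suc a) (Suc b) \<and>
     prod_encode (wcS M C (Suc (2 * r)) k a b, letS M C (Suc k) (a + r) b) \<in> G"
definition tlc :: "nat \<Rightarrow> nat" where
  "tlc v = (\<Sum>a<Suc v. \<Sum>b<Suc v. b * b2n (prod_encode (a, b) = v - 1))"
definition hdc :: "nat \<Rightarrow> nat" where
  "hdc v = (\<Sum>a<Suc v. \<Sum>b<Suc v. a * b2n (prod_encode (a, b) = v - 1))"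
definition tails :: "nat \<Rightarrow> nat \<Rightarrow> nat" where
  "tails p w = rec_nat w (\<lambda>k y. tlc y) p"
definition HitS :: "nat \<Rightarrow> nat set \<Rightarrow> nat \<Rightarrow> nat \<Rightarrow> bool" where
  "HitS M C l w \<longleftrightarrow> (\<forall>p<w. tails p w \<noteq> 0 \<longrightarrow> letS M C l p 0 = hdc (tails p w))"
definition RS :: "nat \<Rightarrow> nat set \<Rightarrow> nat set \<Rightarrow> nat \<Rightarrow> nat set \<Rightarrow> nat \<Rightarrow> nat \<Rightarrow> nat \<Rightarrow> bool" where
  "RS M E G r C m l w \<longleftrightarrow>
     (\<forall>k<Suc m. \<forall>a<Suc m. \<forall>b<Suc m. prod_encode (k, prod_encode (a, b)) = m \<longrightarrow> ValidS M E G r C k a b)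
     \<and> m \<le> l \<and> HitS M C l w"

definition code4E :: "ex \<Rightarrow> ex \<Rightarrow> ex \<Rightarrow> ex \<Rightarrow> ex" where
  "code4E k a b e = peE k (peE a (peE b e))"
lemma sem_code4E[simp]: "sem C env (code4E k a b e) = code4 (sem C env k) (sem C env a) (sem C env b) (sem C env e)"
  by (simp add: code4E_def code4_def)
lemma wfe_code4E[simp]: "wfe n k \<Longrightarrow> wfe n a \<Longrightarrow> wfe n b \<Longrightarrow> wfe n e \<Longrightarrow> wfe n (code4E k a b e)"
  by (simp add: code4E_def)

definition cntE :: "nat \<Rightarrow> ex \<Rightarrow> ex \<Rightarrow> ex \<Rightarrow> ex" where
  "cntE M k a b = sumb (K M) (Orac (code4E (L1 k) (L1 a) (L1 b) (V 0)))"
lemma sem_cntE[simp]: "sem C env (cntE M k a b) = cntS M C (sem C env k) (sem C env a) (sem C env b)"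
  by (simp add: cntE_def cntS_def)
lemma wfe_cntE[simp]: "wfe n k \<Longrightarrow> wfe n a \<Longrightarrow> wfe n b \<Longrightarrow> wfe n (cntE M k a b)"
  by (simp add: cntE_def)

definition letE :: "nat \<Rightarrow> ex \<Rightarrow> ex \<Rightarrow> ex \<Rightarrow> ex" where
  "letE M k a b = sumb (K M) (times (V 0) (Orac (code4E (L1 k) (L1 a) (L1 b) (V 0))))"
lemma sem_letE[simp]: "sem C env (letE M k a b) = letS M C (sem C env k) (sem C env a) (sem C env b)"
  by (simp add: letE_def letS_def)
lemma wfe_letE[simp]: "wfe n k \<Longrightarrow> wfe n a \<Longrightarrow> wfe n b \<Longrightarrow> wfe n (letE M k a b)"
  by (simp add: letE_def)

definition wcE :: "nat \<Rightarrow> nat \<Rightarrow> ex \<Rightarrow> ex \<Rightarrow> ex \<Rightarrow> ex" where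
  "wcE M q k a b = Rec (K q) Z (Succ (peE (letE M (L2 k) (plus (L2 a) (V 1)) (L2 b)) (V 0)))"
lemma sem_wcE[simp]: "sem C env (wcE M q k a b) = wcS M C q (sem C env k) (sem C env a) (sem C env b)"
  by (simp add: wcE_def wcS_def)
lemma wfe_wcE[simp]: "wfe n k \<Longrightarrow> wfe n a \<Longrightarrow> wfe n b \<Longrightarrow> wfe n (wcE M q k a b)"
  by (simp add: wcE_def)

definition validE :: "nat \<Rightarrow> nat set \<Rightarrow> nat set \<Rightarrow> nat \<Rightarrow> ex \<Rightarrow> ex \<Rightarrow> ex \<Rightarrow> ex" where
  "validE M E G r k a b = andE (eqE (cntE M k a b) (K 1)) (andE (memE E (letE M k a b))
     (andE (eqE (letE M k a b) (letE M k (Succ a) (Succ b)))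
       (memE G (peE (wcE M (Suc (2 * r)) k a b) (letE M (Succ k) (plus a (K r)) b)))))"
lemma sem_validE[simp]: "finite E \<Longrightarrow> finite G \<Longrightarrow>
  sem C env (validE M E G r k a b) = b2n (ValidS M E G r C (sem C env k) (sem C env a) (sem C env b))"
  unfolding validE_def ValidS_def by (simp add: b2n_def)
lemma wfe_validE[simp]: "wfe n k \<Longrightarrow> wfe n a \<Longrightarrow> wfe n b \<Longrightarrow> wfe n (validE M E G r k a b)"
  by (simp add: validE_def)

definition tlE :: "ex \<Rightarrow> ex" where
  "tlE v = sumb (Succ v) (sumb (Succ (L1 v)) (times (V 0) (eqE (peE (V 1) (V 0)) (pred (L1 (L1 v))))))"
lemma sem_tlE[simp]: "sem C env (tlE v) = tlc (sem C env v)"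
  by (simp add: tlE_def tlc_def del: sum.lessThan_Suc)
lemma wfe_tlE[simp]: "wfe n v \<Longrightarrow> wfe n (tlE v)" by (simp add: tlE_def)

definition hdE :: "ex \<Rightarrow> ex" where
  "hdE v = sumb (Succ v) (sumb (Succ (L1 v)) (times (V 1) (eqE (peE (V 1) (V 0)) (pred (L1 (L1 v))))))"
lemma sem_hdE[simp]: "sem C env (hdE v) = hdc (sem C env v)"
  by (simp add: hdE_def hdc_def del: sum.lessThan_Suc)
lemma wfe_hdE[simp]: "wfe n v \<Longrightarrow> wfe n (hdE v)" by (simp add: hdE_def)

definition tailsE :: "ex \<Rightarrow> ex \<Rightarrow> ex" where "tailsE p w = Rec p w (tlE (V 0))"
lemma sem_tailsE[simp]: "sem C env (tailsE p w) = tails (sem C env p) (sem C env w)"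
  by (simp add: tailsE_def tails_def)
lemma wfe_tailsE[simp]: "wfe n p \<Longrightarrow> wfe n w \<Longrightarrow> wfe n (tailsE p w)" by (simp add: tailsE_def)

definition hitE :: "nat \<Rightarrow> ex \<Rightarrow> ex \<Rightarrow> ex" where
  "hitE M l w = allB w (impE (sgE (tailsE (V 0) (L1 w))) (eqE (letE M (L1 l) (V 0) Z) (hdE (tailsE (V 0) (L1 w)))))"
lemma sem_hitE[simp]: "sem C env (hitE M l w) = b2n (HitS M C (sem C env l) (sem C env w))"
  by (simp add: hitE_def HitS_def, rule arg_cong[where f=b2n], auto)
lemma wfe_hitE[simp]: "wfe n l \<Longrightarrow> wfe n w \<Longrightarrow> wfe n (hitE M l w)" by (simp add: hitE_def)


definition innerE :: "nat \<Rightarrow> nat set \<Rightarrow> nat set \<Rightarrow> nat \<Rightarrow> ex" where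
  "innerE M E G r = impE (eqE (peE (V 2) (peE (V 1) (V 0))) (V 3)) (validE M E G r (V 2) (V 1) (V 0))"
lemma sem_innerE: "finite E \<Longrightarrow> finite G \<Longrightarrow> sem C (b # a # k # m # rest) (innerE M E G r)
  = b2n (prod_encode (k, prod_encode (a, b)) = m \<longrightarrow> ValidS M E G r C k a b)"
  by (simp add: innerE_def)

definition allsE :: "nat \<Rightarrow> nat set \<Rightarrow> nat set \<Rightarrow> nat \<Rightarrow> ex" where
  "allsE M E G r = allB (Succ (V 0)) (allB (Succ (V 1)) (allB (Succ (V 2)) (innerE M E G r)))"
lemma sem_allsE: "finite E \<Longrightarrow> finite G \<Longrightarrow> sem C (m # rest) (allsE M E G r)
  = b2n (\<forall>k<Suc m. \<forall>a<Suc m. \<forall>b<Suc m. prod_encode (k, prod_encode (a, b)) = m \<longrightarrow> ValidS M E G r C k a b)"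
  by (simp add: allsE_def sem_innerE)

definition mainE :: "nat \<Rightarrow> nat set \<Rightarrow> nat set \<Rightarrow> nat \<Rightarrow> ex" where
  "mainE M E G r = andE (allsE M E G r) (andE (leE (V 0) (V 1)) (hitE M (V 1) (V 2)))"
lemma sem_mainE: "finite E \<Longrightarrow> finite G \<Longrightarrow>
  sem C [m, l, w] (mainE M E G r) = b2n (RS M E G r C m l w)"
  unfolding mainE_def RS_def apply (simp add: sem_allsE) apply (rule arg_cong[where f=b2n]) by blast
lemma wfe_mainE: "wfe 3 (mainE M E G r)" by (simp add: mainE_def allsE_def innerE_def numeral_3_eq_3)
lemma recursive_RS: "finite E \<Longrightarrow> finite G \<Longrightarrow> recursive_pred (RS M E G r)"
  by (rule recursive_pred_ex[OF wfe_mainE[of M E G r]]) (simp add: sem_mainE b2n_def)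


lemma rec_le: "rec_nat 0 (\<lambda>j y. Suc (prod_encode (h j, y))) n = list_encode (rev (map h [0..<n]))"
  by (induction n) auto

lemma wcS_eq: "wcS M C q k a b = list_encode (rev (map (\<lambda>j. letS M C k (a + j) b) [0..<q]))"
  unfolding wcS_def by (rule rec_le)

lemma length_le_code: "length xs \<le> list_encode xs"
proof (induction xs)
  case (Cons x xs)
  then show ?case using le_prod_encode_2[of "list_encode xs" x] by simp
qed simp

lemma sum_delta2:
  fixes g :: "nat \<Rightarrow> nat \<Rightarrow> nat"
  assumes "x \<le> v" "t \<le> v"
  shows "(\<Sum>a<Suc v. \<Sum>b<Suc v. g a b * b2n (prod_encode (a, b) = prod_encode (x, t))) = g x t"
proof -
  have "(\<Sum>b<Suc v. g a b * b2n (prod_encode (a, b) = prod_encode (x, t))) = (if a = x then g a t else 0)" for a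
  proof (cases "a = x")
    case True
    have "(\<Sum>b<Suc v. g a b * b2n (prod_encode (a, b) = prod_encode (x, t))) = (\<Sum>b<Suc v. if b = t then g a b else 0)"
      using True by (intro sum.cong) (auto simp: b2n_def)
    also have "\<dots> = g a t" using assms by (simp add: sum.delta)
    finally show ?thesis using True by simp
  next
    case False then show ?thesis by (simp add: b2n_def)
  qed
  then have "(\<Sum>a<Suc v. \<Sum>b<Suc v. g a b * b2n (prod_encode (a, b) = prod_encode (x, t))) = (\<Sum>a<Suc v. if a = x then g a t else 0)"
    by simp
  also have "\<dots> = g x t" using assms by (simp add: sum.delta)
  finally show ?thesis .
qed

lemma tlc_code: "tlc (list_encode xs) = list_encode (tl xs)"
proof (cases xs)
  case Nil then show ?thesis by (simp add: tlc_def b2n_def)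
next
  case (Cons x ys)
  let ?v = "Suc (prod_encode (x, list_encode ys))"
  have "x \<le> ?v" "list_encode ys \<le> ?v" using le_prod_encode_1 le_prod_encode_2 le_SucI by blast+
  then show ?thesis using Cons sum_delta2[of x ?v "list_encode ys" "\<lambda>a b. b"] by (simp add: tlc_def del: sum.lessThan_Suc)
qed

lemma hdc_code: "hdc (list_encode (x # ys)) = x"
proof -
  let ?v = "Suc (prod_encode (x, list_encode ys))"
  have "x \<le> ?v" "list_encode ys \<le> ?v" using le_prod_encode_1 le_prod_encode_2 le_SucI by blast+
  then show ?thesis using sum_delta2[of x ?v "list_encode ys" "\<lambda>a b. a"] by (simp add: hdc_def del: sum.lessThan_Suc)
qed

lemma tails_code: "tails p (list_encode xs) = list_encode (drop p xs)"
  by (induction p) (auto simp: tails_def tlc_code drop_Suc tl_drop)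

lemma list_encode_0: "list_encode xs = 0 \<longleftrightarrow> xs = []"
  by (cases xs) auto


definition wz :: "('a \<Rightarrow> nat) \<Rightarrow> nat \<Rightarrow> (int \<Rightarrow> 'a) \<Rightarrow> nat" where
  "wz enc r z = list_encode (rev (map (\<lambda>j. enc (z (int j))) [0..<Suc (2 * r)]))"

definition Gset :: "('a \<Rightarrow> nat) \<Rightarrow> nat \<Rightarrow> ((int \<Rightarrow> 'a) \<Rightarrow> (int \<Rightarrow> 'a)) \<Rightarrow> nat set" where
  "Gset enc r f = (\<lambda>z. prod_encode (wz enc r z, enc (f z (int r)))) ` UNIV"

lemma dirB:
  fixes f :: "(int \<Rightarrow> 'a::finite) \<Rightarrow> (int \<Rightarrow> 'a)" and enc :: "'a \<Rightarrow> nat"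
  assumes ca: "cellular_automaton f" and M: "\<forall>c. enc c < M"
    and w: "w \<in> word_code enc ` language (asymptotic_set f)"
  shows "\<exists>C. \<forall>m. \<exists>l. RS M (range enc) (Gset enc r f) r C m l w"
proof -
  obtain u where wu: "w = word_code enc u" and u: "u \<in> language (asymptotic_set f)" using w by blast
  obtain y L where y: "y \<in> asymptotic_set f" and uL: "u = map (\<lambda>i. y (int i)) [0..<L]"
    using u unfolding language_def by blast
  obtain x where x: "\<forall>n. \<exists>k\<ge>n. \<forall>p<L. (f ^^ k) x (int p) = y (int p)"
    using limit_back[OF y] by blast
  define X where "X k = (f ^^ k) x" for k
  define C where "C = {code4 k a b (enc (X k (int a - int b))) | k a b. True}"
  have memC: "code4 k a b e \<in> C \<longleftrightarrow> e = enc (X k (int a - int b))" for k a b e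
    unfolding C_def code4_def by auto
  have lt: "letS M C k a b = enc (X k (int a - int b))" for k a b
  proof -
    have "letS M C k a b = (\<Sum>e<M. if e = enc (X k (int a - int b)) then e else 0)"
      unfolding letS_def memC by (intro sum.cong) auto
    also have "\<dots> = enc (X k (int a - int b))" using M by (simp add: sum.delta)
    finally show ?thesis .
  qed
  have cnt: "cntS M C k a b = 1" for k a b
  proof -
    have "cntS M C k a b = (\<Sum>e<M. if e = enc (X k (int a - int b)) then 1 else 0)"
      unfolding cntS_def memC by (intro sum.cong) auto
    also have "\<dots> = 1" using M by (simp add: sum.delta)
    finally show ?thesis .
  qed
  have valid: "ValidS M (range enc) (Gset enc r f) r C k a b" for k a b
  proof -
    define i0 where "i0 = int a - int b"
    define z where "z = tr i0 (X k)"
    have "wcS M C (Suc (2 * r)) k a b = wz enc r z"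
      unfolding wcS_eq wz_def lt z_def tr_def i0_def by (simp add: algebra_simps)
    moreover have "letS M C (Suc k) (a + r) b = enc (f z (int r))"
    proof -
      have "f z (int r) = tr i0 (f (X k)) (int r)" unfolding z_def by (simp only: f_tr[OF ca])
      then have "f z (int r) = f (X k) (int r + i0)" by (simp add: tr_def)
      moreover have "letS M C (Suc k) (a + r) b = enc (X (Suc k) (int (a + r) - int b))" by (rule lt)
      moreover have eq: "int (a + r) - int b = int r + i0" by (simp add: i0_def)
      have "X (Suc k) (int (a + r) - int b) = f (X k) (int r + i0)"
        by (simp only: eq) (simp add: X_def)
      ultimately show ?thesis by simp
    qed
    ultimately have "prod_encode (wcS M C (Suc (2 * r)) k a b, letS M C (Suc k) (a + r) b) \<in> Gset enc r f"
      unfolding Gset_def by auto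
    then show ?thesis unfolding ValidS_def using cnt by (simp add: lt)
  qed
  define xs where "xs = map enc u"
  have wxs: "w = list_encode xs" by (simp add: wu word_code_def xs_def)
  have lxs: "length xs = L" by (simp add: xs_def uL)
  have "\<exists>l. RS M (range enc) (Gset enc r f) r C m l w" for m
  proof -
    obtain l where l: "l \<ge> m" "\<forall>p<L. X l (int p) = y (int p)" using x unfolding X_def by blast
    have "HitS M C l w" unfolding HitS_def
    proof (intro allI impI)
      fix p assume p: "p < w" "tails p w \<noteq> 0"
      then have "drop p xs \<noteq> []" by (auto simp: wxs tails_code)
      then have pl: "p < length xs" by simp
      then have "tails p w = list_encode (xs ! p # drop (Suc p) xs)"
        by (simp add: wxs tails_code Cons_nth_drop_Suc)
      then have "hdc (tails p w) = xs ! p" by (simp only: hdc_code)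
      moreover have "letS M C l p 0 = enc (X l (int p))" by (simp add: lt)
      moreover have "xs ! p = enc (y (int p))" using pl by (simp add: xs_def uL)
      ultimately show "letS M C l p 0 = hdc (tails p w)" using l pl lxs by simp
    qed
    then show ?thesis unfolding RS_def using valid l by blast
  qed
  then show ?thesis by blast
qed


lemma dirA:
  fixes f :: "(int \<Rightarrow> 'a::finite) \<Rightarrow> (int \<Rightarrow> 'a)" and enc :: "'a \<Rightarrow> nat"
  assumes ca: "cellular_automaton f" and inj: "inj enc"
    and loc: "\<forall>y z i. (\<forall>d. \<bar>d\<bar> \<le> int r \<longrightarrow> y (i + d) = z (i + d)) \<longrightarrow> f y i = f z i"
    and R: "\<forall>m. \<exists>l. RS M (range enc) (Gset enc r f) r C m l w"
  shows "w \<in> word_code enc ` language (asymptotic_set f)"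
proof -
  let ?E = "range enc"
  let ?G = "Gset enc r f"
  have V: "ValidS M ?E ?G r C k a b" for k a b
  proof -
    let ?m = "prod_encode (k, prod_encode (a, b))"
    obtain l where "RS M ?E ?G r C ?m l w" using R by blast
    moreover have "k \<le> ?m" by (rule le_prod_encode_1)
    moreover have "a \<le> ?m" using le_prod_encode_1[of a b] le_prod_encode_2[of "prod_encode (a, b)" k] by linarith
    moreover have "b \<le> ?m" using le_prod_encode_2[of b a] le_prod_encode_2[of "prod_encode (a, b)" k] by linarith
    ultimately show ?thesis unfolding RS_def using le_imp_less_Suc by blast
  qed
  define lt where "lt k a b = letS M C k a b" for k a b
  have tr1: "lt k (a + c) (b + c) = lt k a b" for k a b c
  proof (induction c)
    case (Suc c)
    have "lt k (a + c) (b + c) = lt k (Suc (a + c)) (Suc (b + c))"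
      using V[of k "a + c" "b + c"] unfolding ValidS_def lt_def by simp
    then show ?case using Suc by simp
  qed simp
  have tri: "lt k a b = lt k a' b'" if h: "int a - int b = int a' - int b'" for k a b a' b'
  proof -
    have e: "a + b' = a' + b" using h by linarith
    have "lt k a b = lt k (a + b') (b + b')" by (simp add: tr1)
    also have "\<dots> = lt k (a' + b) (b' + b)" using e by (simp add: add.commute)
    also have "\<dots> = lt k a' b'" by (simp add: tr1)
    finally show ?thesis .
  qed
  have ltE: "lt k a b \<in> range enc" for k a b using V[of k a b] unfolding ValidS_def lt_def by blast
  define T where "T k i = inv enc (lt k (nat i) (nat (- i)))" for k i
  have encT: "enc (T k (int a - int b)) = lt k a b" for k a b
  proof -
    have "lt k (nat (int a - int b)) (nat (- (int a - int b))) = lt k a b" by (rule tri) simp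
    then show ?thesis unfolding T_def using ltE by (simp add: f_inv_into_f)
  qed
  have step: "T (Suc k) = f (T k)" for k
  proof
    fix i
    define a where "a = nat (i - int r)"
    define b where "b = nat (int r - i)"
    have ab: "int a - int b = i - int r" by (simp add: a_def b_def max_def)
    from V[of k a b] obtain z where z1: "wcS M C (Suc (2 * r)) k a b = wz enc r z"
        and z2: "lt (Suc k) (a + r) b = enc (f z (int r))"
      unfolding ValidS_def Gset_def lt_def by auto
    have m1: "map (\<lambda>j. lt k (a + j) b) [0..<Suc (2 * r)] = map (\<lambda>j. enc (z (int j))) [0..<Suc (2 * r)]"
      using z1 unfolding wcS_eq wz_def lt_def by (simp only: list_encode_eq rev_is_rev_conv)
    have m2: "lt k (a + j) b = enc (T k (i - int r + int j))" for j
    proof -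
      have eq: "int (a + j) - int b = i - int r + int j" using ab by simp
      show ?thesis using encT[of k "a + j" b] unfolding eq by simp
    qed
    have zT: "z (int j) = T k (i - int r + int j)" if "j < Suc (2 * r)" for j
    proof -
      have "lt k (a + j) b = enc (z (int j))" using arg_cong[OF m1, of "\<lambda>xs. xs ! j"] that by (simp del: upt_Suc)
      then show ?thesis using m2 inj by (simp add: inj_eq)
    qed
    have "f z (int r) = f (tr (i - int r) (T k)) (int r)"
    proof (rule loc[rule_format])
      fix d :: int assume d: "\<bar>d\<bar> \<le> int r"
      define j where "j = nat (int r + d)"
      have j: "int j = int r + d" "j < Suc (2 * r)" using d by (auto simp: j_def)
      show "z (int r + d) = tr (i - int r) (T k) (int r + d)"
        using zT[OF j(2)] j(1) by (simp add: tr_def algebra_simps)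
    qed
    also have "\<dots> = tr (i - int r) (f (T k)) (int r)" by (simp only: f_tr[OF ca])
    also have "\<dots> = f (T k) i" by (simp add: tr_def)
    finally have fz: "f z (int r) = f (T k) i" .
    have "int (a + r) - int b = i" using ab by simp
    then have "enc (T (Suc k) i) = lt (Suc k) (a + r) b" using encT[of "Suc k" "a + r" b] by simp
    then have "enc (T (Suc k) i) = enc (f (T k) i)" using z2 fz by simp
    then show "T (Suc k) i = f (T k) i" using inj by (simp add: inj_eq)
  qed
  have orbit: "T k = (f ^^ k) (T 0)" for k by (induction k) (simp_all add: step)
  define xs where "xs = list_decode w"
  have wxs: "w = list_encode xs" by (simp add: xs_def)
  have hit: "\<exists>l\<ge>m. \<forall>p<length xs. enc (T l (int p)) = xs ! p" for m
  proof -
    obtain l where "RS M ?E ?G r C m l w" using R by blast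
    then have l: "m \<le> l" "HitS M C l w" unfolding RS_def by auto
    have "enc (T l (int p)) = xs ! p" if p: "p < length xs" for p
    proof -
      have "p < w" using p length_le_code[of xs] wxs by simp
      moreover have tp: "tails p w = list_encode (xs ! p # drop (Suc p) xs)"
        using wxs tails_code Cons_nth_drop_Suc[OF p] by simp
      moreover have "tails p w \<noteq> 0" using tp by simp
      ultimately have "lt l p 0 = hdc (tails p w)" using l(2) unfolding HitS_def lt_def by simp
      then have "lt l p 0 = xs ! p" using tp by (simp only: hdc_code)
      then show ?thesis using encT[of l p 0] by simp
    qed
    then show ?thesis using l by blast
  qed
  obtain l0 where l0: "\<forall>p<length xs. enc (T l0 (int p)) = xs ! p" using hit[of 0] by blast
  define u where "u = map (\<lambda>p. T l0 (int p)) [0..<length xs]"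
  have xsu: "xs = map enc u" unfolding u_def by (rule nth_equalityI) (use l0 in auto)
  have "\<forall>n. \<exists>k\<ge>n. \<forall>p<length xs. (f ^^ k) (T 0) (int p) = u ! p"
  proof
    fix n
    obtain l where l: "l \<ge> n" "\<forall>p<length xs. enc (T l (int p)) = xs ! p" using hit by blast
    have "T l (int p) = u ! p" if "p < length xs" for p
    proof -
      have "enc (T l (int p)) = enc (u ! p)" using l(2) that xsu by simp
      then show ?thesis using inj by (simp add: inj_eq)
    qed
    then show "\<exists>k\<ge>n. \<forall>p<length xs. (f ^^ k) (T 0) (int p) = u ! p" using l(1) orbit by metis
  qed
  then obtain y where y: "y \<in> asymptotic_set f" "\<forall>p<length xs. y (int p) = u ! p"
    using limit_exists[of "length xs" f "T 0" "\<lambda>p. u ! p"] by blast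
  have "u = map (\<lambda>i. y (int i)) [0..<length xs]" using y(2) xsu by (intro nth_equalityI) auto
  then have "u \<in> language (asymptotic_set f)" unfolding language_def using y(1) by blast
  moreover have "w = word_code enc u" by (simp add: wxs xsu word_code_def)
  ultimately show ?thesis by blast
qed

theorem lemma1:
  fixes f :: "(int \<Rightarrow> 'a::finite) \<Rightarrow> (int \<Rightarrow> 'a)" and enc :: "'a \<Rightarrow> nat"
  assumes "cellular_automaton f" and "inj enc"
  shows "Sigma11 (word_code enc ` language (asymptotic_set f))"
proof -
  obtain r where loc: "\<forall>y z i. (\<forall>d. \<bar>d\<bar> \<le> int r \<longrightarrow> y (i + d) = z (i + d)) \<longrightarrow> f y i = f z i"
    using local_rule[OF assms(1)] by blast
  define M where "M = Suc (Max (range enc))"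
  have M: "\<forall>c. enc c < M" unfolding M_def by (simp add: le_imp_less_Suc)
  have fE: "finite (range enc)" by simp
  define W where "W = (\<lambda>xs. list_encode (rev (map enc xs))) ` {xs. set xs \<subseteq> (UNIV :: 'a set) \<and> length xs = Suc (2 * r)}"
  have fW: "finite W" unfolding W_def by (intro finite_imageI finite_lists_length_eq) simp
  have "Gset enc r f \<subseteq> (\<lambda>(a, b). prod_encode (a, b)) ` (W \<times> range enc)"
  proof
    fix g assume "g \<in> Gset enc r f"
    then obtain z where g: "g = prod_encode (wz enc r z, enc (f z (int r)))" unfolding Gset_def by blast
    have "wz enc r z = list_encode (rev (map enc (map (\<lambda>j. z (int j)) [0..<Suc (2 * r)])))"
      unfolding wz_def by (simp only: map_map comp_def)
    moreover have "map (\<lambda>j. z (int j)) [0..<Suc (2 * r)] \<in> {xs. set xs \<subseteq> (UNIV :: 'a set) \<and> length xs = Suc (2 * r)}"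
      by simp
    ultimately have "wz enc r z \<in> W" unfolding W_def by (rule image_eqI)
    then show "g \<in> (\<lambda>(a, b). prod_encode (a, b)) ` (W \<times> range enc)" using g by auto
  qed
  then have fG: "finite (Gset enc r f)" using fW fE by (meson finite_SigmaI finite_imageI finite_subset)
  show ?thesis unfolding Sigma11_def
  proof (intro exI conjI allI)
    show "recursive_pred (RS M (range enc) (Gset enc r f) r)" by (rule recursive_RS[OF fE fG])
    fix w
    show "w \<in> word_code enc ` language (asymptotic_set f) \<longleftrightarrow> (\<exists>C. \<forall>m. \<exists>l. RS M (range enc) (Gset enc r f) r C m l w)"
      using dirA[OF assms loc] dirB[OF assms(1) M] by blast
  qed
qed


end
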